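(* Let $\mathcal{X}$ be a finite set and let $e:\mathcal{X}\times\mathcal{X}\to\mathbb{R}$ be a semimetric, i.e. $e(x,y)=e(y,x)$ for all $x,y\in\mathcal{X}$, and $e(x,y)\ge 0$ for all $x,y\in\mathcal{X}$ with equality if and only if $x=y$. Then there is a metric $d$ on $\mathcal{X}$ such that for every $x,y,z\in\mathcal{X}$, $d(x,y)<d(x,z)$ if and only if $e(x,y)<e(x,z)$. *)

theory Defs
  imports Main "HOL.Real"
begin

definition semimetric_on :: "'a set \<Rightarrow> ('a \<Rightarrow> 'a \<Rightarrow> real) \<Rightarrow> bool" where
  "semimetric_on X e \<longleftrightarrow>
     (\<forall>x\<in>X. \<forall>y\<in>X. e x y = e y x) \<and>
     (\<forall>x\<in>X. \<forall>y\<in>X. e x y \<ge> 0) \<and>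
     (\<forall>x\<in>X. \<forall>y\<in>X. e x y = 0 \<longleftrightarrow> x = y)"

definition metric_on :: "'a set \<Rightarrow> ('a \<Rightarrow> 'a \<Rightarrow> real) \<Rightarrow> bool" where
  "metric_on X d \<longleftrightarrow> semimetric_on X d \<and>
     (\<forall>x\<in>X. \<forall>y\<in>X. \<forall>z\<in>X. d x z \<le> d x y + d y z)"

end

theory Submission
  imports Defs
begin

theorem mainTheorem4:
  fixes X :: "'a set" and e :: "'a \<Rightarrow> 'a \<Rightarrow> real"
  assumes "finite X" and "semimetric_on X e"
  shows "\<exists>d :: 'a \<Rightarrow> 'a \<Rightarrow> real. metric_on X d \<and>
           (\<forall>x\<in>X. \<forall>y\<in>X. \<forall>z\<in>X. d x y < d x z \<longleftrightarrow> e x y < e x z)"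
proof -
  have sym: "\<And>x y. x \<in> X \<Longrightarrow> y \<in> X \<Longrightarrow> e x y = e y x"
   and nn: "\<And>x y. x \<in> X \<Longrightarrow> y \<in> X \<Longrightarrow> e x y \<ge> 0"
   and z: "\<And>x y. x \<in> X \<Longrightarrow> y \<in> X \<Longrightarrow> e x y = 0 \<longleftrightarrow> x = y"
    using assms(2) unfolding semimetric_on_def by auto
  define S where "S = (\<lambda>(x,y). e x y) ` (X \<times> X)"
  define c where "c = Max (insert 0 S)"
  have fin: "finite (insert 0 S)" unfolding S_def using assms(1) by auto
  have cb: "\<And>x y. x \<in> X \<Longrightarrow> y \<in> X \<Longrightarrow> e x y \<le> c"
    unfolding c_def S_def using fin S_def by (intro Max_ge) auto
  have c0: "c \<ge> 0" unfolding c_def using fin by (intro Max_ge) auto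
  define d where "d = (\<lambda>x y. if x = y then 0 else c + e x y)"
  have met: "metric_on X d"
    unfolding metric_on_def semimetric_on_def d_def
  proof (intro conjI ballI)
    fix x y assume "x \<in> X" "y \<in> X"
    thus "(if x = y then 0 else c + e x y) = (if y = x then 0 else c + e y x)"
      using sym by auto
    show "0 \<le> (if x = y then 0 else c + e x y)" using nn c0 \<open>x\<in>X\<close> \<open>y\<in>X\<close> by auto
    show "((if x = y then 0 else c + e x y) = 0) = (x = y)"
      using nn c0 z \<open>x\<in>X\<close> \<open>y\<in>X\<close> by (auto simp: add_nonneg_eq_0_iff)
  next
    fix x y w assume h: "x \<in> X" "y \<in> X" "w \<in> X"
    show "(if x = w then 0 else c + e x w) \<le> (if x = y then 0 else c + e x y) + (if y = w then 0 else c + e y w)"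
      using cb[OF h(1) h(3)] nn[OF h(1) h(2)] nn[OF h(2) h(3)] nn[OF h(1) h(3)] c0 by auto
  qed
  have ord: "\<forall>x\<in>X. \<forall>y\<in>X. \<forall>w\<in>X. d x y < d x w \<longleftrightarrow> e x y < e x w"
  proof (intro ballI)
    fix x y w assume h: "x \<in> X" "y \<in> X" "w \<in> X"
    have a: "e x y = 0 \<longleftrightarrow> x = y" "e x w = 0 \<longleftrightarrow> x = w" using z h by auto
    show "d x y < d x w \<longleftrightarrow> e x y < e x w"
      unfolding d_def using a nn[OF h(1) h(2)] nn[OF h(1) h(3)] c0 by auto
  qed
  show ?thesis using met ord by blast
qed

end
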